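(* Every normal algebra of differentiable functions $\mathcal V$ is an extension of $R_\ell$; that is, it contains elements $u_i^{(n)}$ ($i\in I$, $n\in\mathbb Z_+$) with $\frac{\partial u_i^{(n)}}{\partial u_j^{(m)}}=\delta_{ij}\delta_{mn}$ for all $i,j,m,n$, which can moreover be chosen so that $\partial u_i^{(n)}=u_i^{(n+1)}$.
   Context: $\mathbb F$ field of characteristic 0, $I=\{1,\dots,\ell\}$. An algebra of differentiable functions is a unital commutative associative algebra $\mathcal V$ with a derivation $\partial$ and commuting derivations $\frac{\partial}{\partial u_i^{(n)}}$, only finitely many nonzero on each element, with $[\frac{\partial}{\partial u_i^{(n)}},\partial]=\frac{\partial}{\partial u_i^{(n-1)}}$ (zero if $n=0$). $R_\ell=\mathbb F[u_i^{(n)}]$ with $\partial u_i^{(n)}=u_i^{(n+1)}$. $\mathcal V_{n,i}=\{f:\frac{\partial f}{\partial u_j^{(m)}}=0$ for $(m,j)>(n,i)$ lexicographically$\}$, $\mathcal V_{n,0}=\mathcal V_{n-1,\ell}$. $\mathcal V$ is normal if $\frac{\partial}{\partial u_i^{(n)}}(\mathcal V_{n,i})=\mathcal V_{n,i}$ for all $i\in I,n\in\mathbb Z_+$. *)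

theory Defs
  imports Main
begin

text \<open>A unital commutative associative algebra over a field 'k is modelled as a
  commutative ring 'v together with the structure map emb : 'k \<rightarrow> 'v
  (a unital ring homomorphism); scalar multiplication is c \<cdot> f = emb c * f.\<close>

definition algebra_map :: "('k::field \<Rightarrow> 'v::comm_ring_1) \<Rightarrow> bool" where
  "algebra_map emb \<longleftrightarrow> emb 0 = 0 \<and> emb 1 = 1 \<and>
     (\<forall>a b. emb (a + b) = emb a + emb b) \<and> (\<forall>a b. emb (a * b) = emb a * emb b)"

definition is_derivation :: "('k::field \<Rightarrow> 'v::comm_ring_1) \<Rightarrow> ('v \<Rightarrow> 'v) \<Rightarrow> bool" where
  "is_derivation emb D \<longleftrightarrow>
     (\<forall>f g. D (f + g) = D f + D g) \<and>
     (\<forall>f g. D (f * g) = D f * g + f * D g) \<and>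
     (\<forall>c f. D (emb c * f) = emb c * D f)"

text \<open>Algebra of differentiable functions in \<ell> variables, I = {1..\<ell>}.
  P i n is the partial derivative with respect to u_i^{(n)}, d is \<partial>.\<close>

definition alg_diff_fun ::
  "('k::field_char_0 \<Rightarrow> 'v::comm_ring_1) \<Rightarrow> nat \<Rightarrow> ('v \<Rightarrow> 'v) \<Rightarrow> (nat \<Rightarrow> nat \<Rightarrow> 'v \<Rightarrow> 'v) \<Rightarrow> bool"
  where
  "alg_diff_fun emb l d P \<longleftrightarrow>
     algebra_map emb \<and>
     is_derivation emb d \<and>
     (\<forall>i\<in>{1..l}. \<forall>n. is_derivation emb (P i n)) \<and>
     (\<forall>i\<in>{1..l}. \<forall>j\<in>{1..l}. \<forall>n m f. P i n (P j m f) = P j m (P i n f)) \<and>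
     (\<forall>f. finite {(i, n). i \<in> {1..l} \<and> P i n f \<noteq> 0}) \<and>
     (\<forall>i\<in>{1..l}. \<forall>n f. P i n (d f) - d (P i n f) = (if n = 0 then 0 else P i (n - 1) f))"

definition Vfilt :: "nat \<Rightarrow> (nat \<Rightarrow> nat \<Rightarrow> 'v::comm_ring_1 \<Rightarrow> 'v) \<Rightarrow> nat \<Rightarrow> nat \<Rightarrow> 'v set" where
  "Vfilt l P n i = {f. \<forall>j\<in>{1..l}. \<forall>m. (n < m \<or> (m = n \<and> i < j)) \<longrightarrow> P j m f = 0}"

definition normal_adf ::
  "('k::field_char_0 \<Rightarrow> 'v::comm_ring_1) \<Rightarrow> nat \<Rightarrow> ('v \<Rightarrow> 'v) \<Rightarrow> (nat \<Rightarrow> nat \<Rightarrow> 'v \<Rightarrow> 'v) \<Rightarrow> bool"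
  where
  "normal_adf emb l d P \<longleftrightarrow> alg_diff_fun emb l d P \<and>
     (\<forall>i\<in>{1..l}. \<forall>n. P i n ` Vfilt l P n i = Vfilt l P n i)"

end

theory Submission
  imports Defs
begin

lemma der_zero: "is_derivation emb D \<Longrightarrow> D 0 = 0"
  unfolding is_derivation_def by (metis add_cancel_left_right add_0)

lemma der_one: "is_derivation emb D \<Longrightarrow> D 1 = 0"
  unfolding is_derivation_def by (metis add_cancel_left_right mult_1 mult_1_right)

lemma der_diff: "is_derivation emb D \<Longrightarrow> D (a - b) = D a - D b"
  unfolding is_derivation_def by (metis add_diff_cancel diff_add_cancel)

lemma step_u0:
  fixes emb :: "'k::field_char_0 \<Rightarrow> 'v::comm_ring_1"
  assumes N: "normal_adf emb l d P" and i: "i \<in> {1..l}"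
  shows "\<exists>h\<in>Vfilt l P 0 i. P i 0 h = 1 \<and> (\<forall>k\<in>{1..l}. i - r \<le> k \<and> k < i \<longrightarrow> P k 0 h = 0)"
proof (induction r)
  case 0
  have A: "alg_diff_fun emb l d P" and S: "P i 0 ` Vfilt l P 0 i = Vfilt l P 0 i"
    using N i unfolding normal_adf_def by auto
  have "(1::'v) \<in> Vfilt l P 0 i" using A der_one unfolding Vfilt_def alg_diff_fun_def by blast
  then obtain h where "h \<in> Vfilt l P 0 i" "P i 0 h = 1" using S by (metis imageE)
  then show ?case by auto
next
  case (Suc r)
  then obtain h where h: "h \<in> Vfilt l P 0 i" "P i 0 h = 1"
     and hk: "\<forall>k\<in>{1..l}. i - r \<le> k \<and> k < i \<longrightarrow> P k 0 h = 0" by blast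
  show ?case
  proof (cases "i - Suc r \<ge> 1 \<and> i - Suc r < i")
    case False
    then have "\<forall>k\<in>{1..l}. i - Suc r \<le> k \<and> k < i \<longrightarrow> i - r \<le> k" by auto
    then show ?thesis using h hk by blast
  next
    case True
    define j where "j = i - Suc r"
    have j: "j \<in> {1..l}" "j < i" using True i j_def by auto
    have A: "alg_diff_fun emb l d P" and S: "P j 0 ` Vfilt l P 0 j = Vfilt l P 0 j"
      using N j unfolding normal_adf_def by auto
    have der: "\<And>a n. a \<in> {1..l} \<Longrightarrow> is_derivation emb (P a n)"
      and comm: "\<And>a b n m f. a \<in> {1..l} \<Longrightarrow> b \<in> {1..l} \<Longrightarrow> P a n (P b m f) = P b m (P a n f)"
      using A unfolding alg_diff_fun_def by blast+
    define g where "g = P j 0 h"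
    have "g \<in> Vfilt l P 0 j"
      unfolding Vfilt_def
    proof (intro CollectI ballI allI impI)
      fix k and m :: nat assume k: "k \<in> {1..l}" and km: "0 < m \<or> m = 0 \<and> j < k"
      have "P k m g = P j 0 (P k m h)" unfolding g_def by (rule comm[OF k j(1)])
      moreover have "P k m h = 0 \<or> P k m h = 1"
      proof -
        { assume "0 < m \<or> i < k" then have "P k m h = 0" using h(1) k unfolding Vfilt_def by (cases m) auto }
        moreover { assume "m = 0" "k = i" then have "P k m h = 1" using h by simp }
        moreover { assume "m = 0" "j < k" "k < i" then have "P k m h = 0" using hk k j_def by auto }
        ultimately show ?thesis using km by linarith
      qed
      ultimately show "P k m g = 0" using der_zero[OF der[OF j(1)]] der_one[OF der[OF j(1)]] by auto
    qed
    then obtain F where F: "F \<in> Vfilt l P 0 j" "P j 0 F = g" using S by (metis imageE)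
    have F0: "\<And>k m. k \<in> {1..l} \<Longrightarrow> 0 < m \<or> j < k \<Longrightarrow> P k m F = 0"
    proof -
      fix k and m :: nat assume "k \<in> {1..l}" "0 < m \<or> j < k"
      moreover have "\<forall>k\<in>{1..l}. \<forall>m. (0 < m \<or> (m = 0 \<and> j < k)) \<longrightarrow> P k m F = 0"
        using F(1) unfolding Vfilt_def by simp
      ultimately show "P k m F = 0" by (cases m) auto
    qed
    have h0: "\<And>k m. k \<in> {1..l} \<Longrightarrow> 0 < m \<or> i < k \<Longrightarrow> P k m h = 0"
    proof -
      fix k and m :: nat assume "k \<in> {1..l}" "0 < m \<or> i < k"
      moreover have "\<forall>k\<in>{1..l}. \<forall>m. (0 < m \<or> (m = 0 \<and> i < k)) \<longrightarrow> P k m h = 0"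
        using h(1) unfolding Vfilt_def by simp
      ultimately show "P k m h = 0" by (cases m) auto
    qed
    have dd: "\<And>k m. k \<in> {1..l} \<Longrightarrow> P k m (h - F) = P k m h - P k m F"
      using der_diff[OF der] by blast
    have "h - F \<in> Vfilt l P 0 i" unfolding Vfilt_def
      using dd h0 F0 j(2) by (auto simp del: atLeastAtMost_iff)
    moreover have "P i 0 (h - F) = 1"
    proof -
      have "P i 0 F = 0" using F0[OF i] j(2) by blast
      then show ?thesis using dd[OF i, of 0] h(2) by simp
    qed
    moreover have "\<forall>k\<in>{1..l}. i - Suc r \<le> k \<and> k < i \<longrightarrow> P k 0 (h - F) = 0"
    proof (intro ballI impI)
      fix k assume k: "k \<in> {1..l}" "i - Suc r \<le> k \<and> k < i"
      show "P k 0 (h - F) = 0"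
      proof (cases "k = j")
        case True
        have "P k 0 h = g" unfolding g_def True ..
        moreover have "P k 0 F = g" using F(2) True by simp
        ultimately show ?thesis using dd[OF k(1), of 0] by simp
      next
        case False
        then have "j < k" "i - r \<le> k" using k unfolding j_def by auto
        then have "P k 0 F = 0" "P k 0 h = 0" using F0[OF k(1)] hk k by blast+
        then show ?thesis using dd[OF k(1), of 0] by simp
      qed
    qed
    ultimately show ?thesis by blast
  qed
qed

theorem proposition4p3:
  fixes emb :: "'k::field_char_0 \<Rightarrow> 'v::comm_ring_1"
    and l :: nat and d :: "'v \<Rightarrow> 'v" and P :: "nat \<Rightarrow> nat \<Rightarrow> 'v \<Rightarrow> 'v"
  assumes "normal_adf emb l d P"
  shows "\<exists>u :: nat \<Rightarrow> nat \<Rightarrow> 'v.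
           (\<forall>i\<in>{1..l}. \<forall>j\<in>{1..l}. \<forall>n m. P j m (u i n) = (if i = j \<and> m = n then 1 else 0)) \<and>
           (\<forall>i\<in>{1..l}. \<forall>n. d (u i n) = u i (Suc n))"
proof -
  have A: "alg_diff_fun emb l d P" using assms unfolding normal_adf_def by blast
  have dder: "is_derivation emb d" using A unfolding alg_diff_fun_def by blast
  have comm: "\<And>j m f. j \<in> {1..l} \<Longrightarrow> P j m (d f) = d (P j m f) + (if m = 0 then 0 else P j (m - 1) f)"
  proof -
    fix j m f assume j: "j \<in> {1..l}"
    have "P j m (d f) - d (P j m f) = (if m = 0 then 0 else P j (m - 1) f)"
      using A j unfolding alg_diff_fun_def by blast
    then show "P j m (d f) = d (P j m f) + (if m = 0 then 0 else P j (m - 1) f)"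
      by (simp add: algebra_simps)
  qed
  define u0 where "u0 i = (SOME h. h \<in> Vfilt l P 0 i \<and> P i 0 h = 1 \<and>
      (\<forall>k\<in>{1..l}. i - i \<le> k \<and> k < i \<longrightarrow> P k 0 h = 0))" for i
  have u0: "\<And>i j m. i \<in> {1..l} \<Longrightarrow> j \<in> {1..l} \<Longrightarrow> P j m (u0 i) = (if i = j \<and> m = 0 then 1 else 0)"
  proof -
    fix i j m assume i: "i \<in> {1..l}" and j: "j \<in> {1..l}"
    have "\<exists>h. h \<in> Vfilt l P 0 i \<and> P i 0 h = 1 \<and>
      (\<forall>k\<in>{1..l}. i - i \<le> k \<and> k < i \<longrightarrow> P k 0 h = 0)"
      using step_u0[OF assms i, of i] by blast
    then have H0: "u0 i \<in> Vfilt l P 0 i \<and> P i 0 (u0 i) = 1 \<and>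
      (\<forall>k\<in>{1..l}. i - i \<le> k \<and> k < i \<longrightarrow> P k 0 (u0 i) = 0)"
      unfolding u0_def by (rule someI_ex)
    then have H: "u0 i \<in> Vfilt l P 0 i" "P i 0 (u0 i) = 1"
      "\<forall>k\<in>{1..l}. k < i \<longrightarrow> P k 0 (u0 i) = 0" by auto
    show "P j m (u0 i) = (if i = j \<and> m = 0 then 1 else 0)"
    proof -
      have Hv: "\<forall>k\<in>{1..l}. \<forall>m. (0 < m \<or> (m = 0 \<and> i < k)) \<longrightarrow> P k m (u0 i) = 0"
        using H(1) unfolding Vfilt_def by simp
      show ?thesis
      proof (cases m)
        case 0
        then show ?thesis using Hv H(2,3) j by (cases "j < i"; cases "j = i") (auto simp del: atLeastAtMost_iff)
      next
        case (Suc m') then show ?thesis using Hv j by auto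
      qed
    qed
  qed
  define u where "u i n = (d ^^ n) (u0 i)" for i n
  have "\<forall>j\<in>{1..l}. \<forall>m. P j m (u i n) = (if i = j \<and> m = n then 1 else 0)" if i: "i \<in> {1..l}" for i n
  proof (induction n)
    case 0 then show ?case using u0 i unfolding u_def by simp
  next
    case (Suc n)
    show ?case
    proof (intro allI ballI)
      fix j m assume j: "j \<in> {1..l}"
      have e: "u i (Suc n) = d (u i n)" unfolding u_def by simp
      have c: "d (P j m (u i n)) = 0" using Suc j der_zero[OF dder] der_one[OF dder] by simp
      show "P j m (u i (Suc n)) = (if i = j \<and> m = Suc n then 1 else 0)"
        unfolding e comm[OF j] c using Suc j by (cases m) auto
    qed
  qed
  moreover have "\<forall>i\<in>{1..l}. \<forall>n. d (u i n) = u i (Suc n)" unfolding u_def by simp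
  ultimately show ?thesis by blast
qed

end
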